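(* Let $\mathbf m\in M_{(b_i);(c_j)}$, let $i\in[1,n]$, $j\in[1,n']$ and let $a\in B_i$ with $w_{\mathbf m}(a)\in C_j$. Let $\mathbf e$ be the $n\times n'$ matrix with $e_{i,j}=1$ and all other entries $0$, so that $\mathbf m-\mathbf e\in M_{(\tilde b_{i'});(\tilde c_{j'})}$ where $\tilde b_{i'}=b_{i'}-\delta_{i,i'}$, $\tilde c_{j'}=c_{j'}-\delta_{j,j'}$. Then (1) $w_{\mathbf m}^{\hat a}=w_{\mathbf m-\mathbf e}$ (the latter defined in $S_{d-1}$ with respect to the tuples $(\tilde b_{i'}),(\tilde c_{j'})$); (2) $\ell(\mathbf m)-\ell(\mathbf m-\mathbf e)$ equals each of $m_{\le i,\ge j}+m_{\ge i,\le j}-m_{i,j}-1$, $\;m_{\le i-1,\ge j}+m_{\ge i+1,\le j}+b_i-1$, and $\;m_{\le i,\ge j+1}+m_{\ge i,\le j-1}+c_j-1$.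
   Context: Let $d\ge1$ and let $(b_i)_{i\in[1,n]}$, $(c_j)_{j\in[1,n']}$ be tuples of nonnegative integers each summing to $d$. $M_{(b_i);(c_j)}$ is the set of $n\times n'$ matrices with entries in $\mathbb N$, row sums $b_i$ and column sums $c_j$. Partial sums: $m_{\le i,\ge j}=\sum_{i'\le i,\,j'\ge j}m_{i',j'}$, $m_{\ge i,\le j}=\sum_{i'\ge i,\,j'\le j}m_{i',j'}$ (empty sums are $0$). Partition $[1,d]$ into consecutive (possibly empty) intervals $B_1<\dots<B_n$ with $|B_i|=b_i$ and $C_1<\dots<C_{n'}$ with $|C_j|=c_j$. $S_d$ is the symmetric group (Coxeter generators adjacent transpositions, length $\ell$). With $S_{(b_i)},S_{(c_j)}$ the subgroups preserving each $B_i$, resp. each $C_j$, the map $\psi(w)_{i,j}=|w(B_i)\cap C_j|$ induces a bijection $S_{(c_j)}\backslash S_d/S_{(b_i)}\to M_{(b_i);(c_j)}$; $w_{\mathbf m}$ is the longest element of the double coset corresponding to $\mathbf m$, and $\ell(\mathbf m)=\ell(w_{\mathbf m})$. For $a\in[1,d]$ let $\sigma_a:[1,d]\setminus\{a\}\to[1,d-1]$ be the order-preserving bijection, and for $w\in S_d$ set $w^{\hat a}=\sigma_{w(a)}\circ w\circ\sigma_a^{-1}\in S_{d-1}$. *)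

theory Defs
  imports "HOL-Combinatorics.Combinatorics"
begin

(* Tuples (b_i)_{i in [1,n]} are functions nat => nat, only the values on [1,n] matter.
   Matrices are functions nat => nat => nat, entries outside [1,n]x[1,n'] are 0. *)

definition Blk :: "(nat \<Rightarrow> nat) \<Rightarrow> nat \<Rightarrow> nat set" where
  "Blk b i = {(\<Sum>k\<in>{1..<i}. b k) + 1 .. (\<Sum>k\<in>{1..i}. b k)}"

definition matset :: "nat \<Rightarrow> nat \<Rightarrow> (nat \<Rightarrow> nat) \<Rightarrow> (nat \<Rightarrow> nat) \<Rightarrow> (nat \<Rightarrow> nat \<Rightarrow> nat) set" where
  "matset n n' b c = {m. (\<forall>i\<in>{1..n}. (\<Sum>j\<in>{1..n'}. m i j) = b i)
                       \<and> (\<forall>j\<in>{1..n'}. (\<Sum>i\<in>{1..n}. m i j) = c j)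
                       \<and> (\<forall>i j. \<not>(i \<in> {1..n} \<and> j \<in> {1..n'}) \<longrightarrow> m i j = 0)}"

definition psi :: "nat \<Rightarrow> nat \<Rightarrow> (nat \<Rightarrow> nat) \<Rightarrow> (nat \<Rightarrow> nat) \<Rightarrow> (nat \<Rightarrow> nat) \<Rightarrow> nat \<Rightarrow> nat \<Rightarrow> nat" where
  "psi n n' b c w = (\<lambda>i j. if i \<in> {1..n} \<and> j \<in> {1..n'}
                           then card (w ` Blk b i \<inter> Blk c j) else 0)"

definition clen :: "nat \<Rightarrow> (nat \<Rightarrow> nat) \<Rightarrow> nat" where
  "clen d w = (LEAST k. \<exists>ss. length ss = k \<and> set ss \<subseteq> {1..<d}
                  \<and> w = foldr (\<lambda>s f. transpose s (Suc s) \<circ> f) ss id)"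

definition dcoset :: "nat \<Rightarrow> nat \<Rightarrow> nat \<Rightarrow> (nat \<Rightarrow> nat) \<Rightarrow> (nat \<Rightarrow> nat) \<Rightarrow> (nat \<Rightarrow> nat \<Rightarrow> nat) \<Rightarrow> (nat \<Rightarrow> nat) set" where
  "dcoset d n n' b c m = {w. w permutes {1..d} \<and> psi n n' b c w = m}"

definition wlong :: "nat \<Rightarrow> nat \<Rightarrow> nat \<Rightarrow> (nat \<Rightarrow> nat) \<Rightarrow> (nat \<Rightarrow> nat) \<Rightarrow> (nat \<Rightarrow> nat \<Rightarrow> nat) \<Rightarrow> nat \<Rightarrow> nat" where
  "wlong d n n' b c m = (THE w. w \<in> dcoset d n n' b c m \<and>
        (\<forall>w'\<in>dcoset d n n' b c m. clen d w' \<le> clen d w))"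

definition mlen :: "nat \<Rightarrow> nat \<Rightarrow> nat \<Rightarrow> (nat \<Rightarrow> nat) \<Rightarrow> (nat \<Rightarrow> nat) \<Rightarrow> (nat \<Rightarrow> nat \<Rightarrow> nat) \<Rightarrow> nat" where
  "mlen d n n' b c m = clen d (wlong d n n' b c m)"

definition sig :: "nat \<Rightarrow> nat \<Rightarrow> nat" where
  "sig a x = (if x < a then x else x - 1)"

definition siginv :: "nat \<Rightarrow> nat \<Rightarrow> nat" where
  "siginv a y = (if y < a then y else y + 1)"

definition hat :: "(nat \<Rightarrow> nat) \<Rightarrow> nat \<Rightarrow> nat \<Rightarrow> nat" where
  "hat w a = sig (w a) \<circ> w \<circ> siginv a"

definition msLG :: "nat \<Rightarrow> (nat \<Rightarrow> nat \<Rightarrow> nat) \<Rightarrow> nat \<Rightarrow> nat \<Rightarrow> nat" where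
  "msLG n' m i j = (\<Sum>i'\<in>{1..i}. \<Sum>j'\<in>{j..n'}. m i' j')"

definition msGL :: "nat \<Rightarrow> (nat \<Rightarrow> nat \<Rightarrow> nat) \<Rightarrow> nat \<Rightarrow> nat \<Rightarrow> nat" where
  "msGL n m i j = (\<Sum>i'\<in>{i..n}. \<Sum>j'\<in>{1..j}. m i' j')"

end

theory Submission
  imports Defs
begin


abbreviation PS :: "(nat \<Rightarrow> nat) \<Rightarrow> nat \<Rightarrow> nat" where
  "PS b k \<equiv> (\<Sum>t\<in>{1..k}. b t)"

lemma PS_lt: "(\<Sum>t\<in>{1..<k}. b t) = PS b (k - 1)"
proof -
  have "{1..<k} = {1..k-1}" by auto
  thus ?thesis by simp
qed

lemma Blk_mem: "x \<in> Blk b i \<longleftrightarrow> (\<Sum>t\<in>{1..<i}. b t) < x \<and> x \<le> PS b i"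
  unfolding Blk_def by auto

lemma PS_Suc: "i \<ge> 1 \<Longrightarrow> PS b i = (\<Sum>t\<in>{1..<i}. b t) + b i"
proof -
  assume "i \<ge> 1"
  hence "{1..i} = insert i {1..<i}" by auto
  thus ?thesis by simp
qed

lemma PS_mono_lt: "i < i' \<Longrightarrow> PS b i \<le> (\<Sum>t\<in>{1..<i'}. b t)"
  by (rule sum_mono2) auto

lemma Blk_order: "x \<in> Blk b i \<Longrightarrow> y \<in> Blk b i' \<Longrightarrow> i < i' \<Longrightarrow> x < y"
  using PS_mono_lt[of i i' b] unfolding Blk_mem by linarith

lemma Blk_disj: "x \<in> Blk b i \<Longrightarrow> x \<in> Blk b i' \<Longrightarrow> i = i'"
  using Blk_order[of x b i x i'] Blk_order[of x b i' x i] by (metis less_irrefl nat_neq_iff)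

lemma Blk_card: "i \<ge> 1 \<Longrightarrow> card (Blk b i) = b i"
  unfolding Blk_def using PS_Suc[of i b] by simp

lemma Blk_0: "Blk b 0 = {}" unfolding Blk_def by simp

lemma Blk_finite: "finite (Blk b i)" unfolding Blk_def by simp

lemma Blk_ge1: "x \<in> Blk b i \<Longrightarrow> 1 \<le> x" unfolding Blk_mem by simp

lemma Blk_sub: "i \<in> {1..n} \<Longrightarrow> Blk b i \<subseteq> {1..PS b n}"
proof
  fix x assume i: "i \<in> {1..n}" and x: "x \<in> Blk b i"
  have "PS b i \<le> PS b n" using i by (intro sum_mono2) auto
  thus "x \<in> {1..PS b n}" using x unfolding Blk_mem by auto
qed

lemma Blk_cover: "x \<in> {1..PS b n} \<Longrightarrow> \<exists>i\<in>{1..n}. x \<in> Blk b i"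
proof (induction n)
  case 0 thus ?case by simp
next
  case (Suc n)
  show ?case
  proof (cases "x \<le> PS b n")
    case True thus ?thesis using Suc by force
  next
    case False
    have "x \<in> Blk b (Suc n)" using False Suc.prems PS_Suc[of "Suc n" b]
      unfolding Blk_mem by (simp add: PS_lt)
    thus ?thesis by auto
  qed
qed

lemma Blk_interval: "x \<in> Blk b i \<Longrightarrow> y \<in> Blk b i \<Longrightarrow> x \<le> z \<Longrightarrow> z \<le> y \<Longrightarrow> z \<in> Blk b i"
  unfolding Blk_mem by auto

lemma sig_siginv[simp]: "sig a (siginv a y) = y"
  unfolding sig_def siginv_def by auto
lemma siginv_sig[simp]: "x \<noteq> a \<Longrightarrow> siginv a (sig a x) = x"
  unfolding sig_def siginv_def by auto
lemma siginv_neq[simp]: "siginv a y \<noteq> a"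
  unfolding siginv_def by auto
lemma sig_inj: "x \<noteq> a \<Longrightarrow> y \<noteq> a \<Longrightarrow> sig a x = sig a y \<longleftrightarrow> x = y"
  unfolding sig_def by auto
lemma sig_less: "x \<noteq> a \<Longrightarrow> y \<noteq> a \<Longrightarrow> sig a x < sig a y \<longleftrightarrow> x < y"
  unfolding sig_def by auto
lemma sig_inj_on: "inj_on (sig a) (- {a})"
  by (rule inj_onI) (simp add: sig_inj)

lemma sum_dec: fixes b :: "nat \<Rightarrow> nat" shows "finite A \<Longrightarrow> b i \<ge> 1 \<Longrightarrow>
   sum (b(i := b i - 1)) A = sum b A - (if i \<in> A then 1 else 0)"
proof -
  assume f: "finite A" and bi: "b i \<ge> 1"
  show ?thesis
  proof (cases "i \<in> A")
    case True
    have "sum (b(i := b i - 1)) A = (b(i := b i - 1)) i + sum (b(i := b i - 1)) (A - {i})"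
      using sum.remove[OF f True, of "b(i := b i - 1)"] by simp
    also have "sum (b(i := b i - 1)) (A - {i}) = sum b (A - {i})"
      by (rule sum.cong) auto
    also have "sum b A = b i + sum b (A - {i})" using sum.remove[OF f True] .
    ultimately show ?thesis using True bi by simp
  next
    case False
    have "sum (b(i := b i - 1)) A = sum b A" by (rule sum.cong) (use False in auto)
    thus ?thesis using False by simp
  qed
qed

lemma Blk_ne: "a \<in> Blk b i \<Longrightarrow> i \<ge> 1 \<and> b i \<ge> 1"
proof -
  assume a: "a \<in> Blk b i"
  have "Blk b i \<noteq> {}" using a by auto
  hence "card (Blk b i) \<ge> 1" using Blk_finite by (simp add: Suc_le_eq card_gt_0_iff)
  moreover have "i \<noteq> 0" using a Blk_0 by (cases i) auto
  ultimately show ?thesis using Blk_card by (simp add: Suc_le_eq)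
qed

lemma Blk_red: assumes a: "a \<in> Blk b i" and x: "x \<noteq> a"
  shows "sig a x \<in> Blk (b(i := b i - 1)) i' \<longleftrightarrow> x \<in> Blk b i'"
proof -
  have i1: "i \<ge> 1" and bi: "b i \<ge> 1" using Blk_ne[OF a] by auto
  have s1: "PS (b(i := b i - 1)) i' = PS b i' - (if i \<le> i' then 1 else 0)"
    using sum_dec[of "{1..i'}" b i] bi i1 by simp
  have s2: "(\<Sum>t\<in>{1..<i'}. (b(i := b i - 1)) t) = (\<Sum>t\<in>{1..<i'}. b t) - (if i < i' then 1 else 0)"
    using sum_dec[of "{1..<i'}" b i] bi i1 by simp
  have L: "(\<Sum>t\<in>{1..<i}. b t) < a" "a \<le> PS b i" using a unfolding Blk_mem by auto
  have o1: "i' < i \<Longrightarrow> PS b i' \<le> (\<Sum>t\<in>{1..<i}. b t)" by (rule PS_mono_lt)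
  have o2: "i < i' \<Longrightarrow> PS b i \<le> (\<Sum>t\<in>{1..<i'}. b t)" by (rule PS_mono_lt)
  have o3: "(\<Sum>t\<in>{1..<i'}. b t) \<le> PS b i'" by (rule sum_mono2) auto
  have o4: "i' = i \<Longrightarrow> PS b i' = (\<Sum>t\<in>{1..<i'}. b t) + b i" using PS_Suc[OF i1, of b] by simp
  define A1 where "A1 = (\<Sum>t\<in>{1..<i'}. b t)"
  define A2 where "A2 = PS b i'"
  define A3 where "A3 = (\<Sum>t\<in>{1..<i}. b t)"
  define A4 where "A4 = PS b i"
  have g: "sig a x \<in> Blk (b(i := b i - 1)) i' \<longleftrightarrow>
     (A1 - (if i < i' then 1 else 0) < sig a x \<and> sig a x \<le> A2 - (if i \<le> i' then 1 else 0))"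
    unfolding Blk_mem s1 s2 A1_def A2_def by (rule refl)
  have h: "x \<in> Blk b i' \<longleftrightarrow> A1 < x \<and> x \<le> A2" by (simp add: Blk_mem A1_def A2_def)
  have L': "A3 < a" "a \<le> A4" using L A3_def A4_def by auto
  have o1': "i' < i \<Longrightarrow> A2 \<le> A3" using o1 A2_def A3_def by simp
  have o2': "i < i' \<Longrightarrow> A4 \<le> A1" using o2 A4_def A1_def by simp
  have o3': "A1 \<le> A2" using o3 A1_def A2_def by simp
  have o4': "i' = i \<Longrightarrow> A2 = A1 + b i \<and> A1 = A3" using o4 A1_def A2_def A3_def by simp
  have o5: "A4 = A3 + b i" using PS_Suc[OF i1, of b] A3_def A4_def by simp
  consider "i' < i" | "i' = i" | "i < i'" by linarith
  then show ?thesis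
  proof cases
    case 1
    have "\<not> i \<le> i'" using 1 by simp
    thus ?thesis using 1 x L' o1' o3' unfolding g h unfolding sig_def by (cases "x < a") auto
  next
    case 2
    thus ?thesis using x L' o4' o5 bi unfolding g h unfolding sig_def by (cases "x < a") auto
  next
    case 3
    thus ?thesis using x L' o2' o3' unfolding g h unfolding sig_def by (cases "x < a") auto
  qed
qed

lemma Blk_red': assumes a: "a \<in> Blk b i"
  shows "y \<in> Blk (b(i := b i - 1)) i' \<longleftrightarrow> siginv a y \<in> Blk b i'"
  using Blk_red[OF a siginv_neq[of a y], of i'] by simp



definition invs :: "nat \<Rightarrow> (nat \<Rightarrow> nat) \<Rightarrow> (nat \<times> nat) set" where
  "invs d w = {(x,y). x \<in> {1..d} \<and> y \<in> {1..d} \<and> x < y \<and> w y < w x}"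

definition ninv :: "nat \<Rightarrow> (nat \<Rightarrow> nat) \<Rightarrow> nat" where
  "ninv d w = card (invs d w)"

lemma perm_D: "w permutes {1..d} \<Longrightarrow> x \<in> {1..d} \<Longrightarrow> w x \<in> {1..d}"
  by (metis permutes_in_image)

lemma invs_finite: "finite (invs d w)"
  by (rule finite_subset[of _ "{1..d} \<times> {1..d}"]) (auto simp: invs_def)

lemma transpose_less:
  assumes "u \<noteq> v" "\<not> ({u, v} = {t, Suc t})"
  shows "transpose t (Suc t) u < transpose t (Suc t) v \<longleftrightarrow> u < v"
  using assms by (auto simp: transpose_def doubleton_eq_iff)

lemma inv_left:
  assumes inj: "inj_on w {1..d}" and P: "P \<in> {1..d}" and Q: "Q \<in> {1..d}" and PQ: "P < Q"
    and t: "(w P = t \<and> w Q = Suc t) \<or> (w P = Suc t \<and> w Q = t)"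
  shows "ninv d (transpose t (Suc t) \<circ> w) =
           (if (P,Q) \<in> invs d w then ninv d w - 1 else ninv d w + 1)"
proof -
  let ?v = "transpose t (Suc t) \<circ> w"
  have eq: "invs d ?v - {(P,Q)} = invs d w - {(P,Q)}"
  proof (intro set_eqI iffI)
    fix z assume z: "z \<in> invs d ?v - {(P,Q)}"
    obtain x y where xy: "z = (x,y)" by (cases z)
    have x: "x \<in> {1..d}" and y: "y \<in> {1..d}" and lt: "x < y" and ne: "(x,y) \<noteq> (P,Q)"
      using z xy by (auto simp: invs_def)
    have wne: "w y \<noteq> w x" using inj x y lt by (metis inj_on_contraD less_irrefl)
    have nd: "\<not> ({w y, w x} = {t, Suc t})"
    proof
      assume h: "{w y, w x} = {t, Suc t}"
      hence "{w y, w x} = {w P, w Q}" using t by auto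
      hence "(w y = w P \<and> w x = w Q) \<or> (w y = w Q \<and> w x = w P)" by (auto simp: doubleton_eq_iff)
      hence "(y = P \<and> x = Q) \<or> (y = Q \<and> x = P)" using inj x y P Q by (auto dest: inj_onD)
      thus False using lt PQ ne by auto
    qed
    have "w y < w x" using z xy transpose_less[OF wne nd] by (auto simp: invs_def)
    thus "z \<in> invs d w - {(P,Q)}" using x y lt ne xy by (auto simp: invs_def)
  next
    fix z assume z: "z \<in> invs d w - {(P,Q)}"
    obtain x y where xy: "z = (x,y)" by (cases z)
    have x: "x \<in> {1..d}" and y: "y \<in> {1..d}" and lt: "x < y" and ne: "(x,y) \<noteq> (P,Q)"
      using z xy by (auto simp: invs_def)
    have wne: "w y \<noteq> w x" using inj x y lt by (metis inj_on_contraD less_irrefl)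
    have nd: "\<not> ({w y, w x} = {t, Suc t})"
    proof
      assume h: "{w y, w x} = {t, Suc t}"
      hence "{w y, w x} = {w P, w Q}" using t by auto
      hence "(w y = w P \<and> w x = w Q) \<or> (w y = w Q \<and> w x = w P)" by (auto simp: doubleton_eq_iff)
      hence "(y = P \<and> x = Q) \<or> (y = Q \<and> x = P)" using inj x y P Q by (auto dest: inj_onD)
      thus False using lt PQ ne by auto
    qed
    have "w y < w x" using z xy by (auto simp: invs_def)
    hence "?v y < ?v x" using transpose_less[OF wne nd] by simp
    thus "z \<in> invs d ?v - {(P,Q)}" using x y lt ne xy by (auto simp: invs_def)
  qed
  have flip: "(P,Q) \<in> invs d ?v \<longleftrightarrow> (P,Q) \<notin> invs d w"
    using t P Q PQ by (auto simp: invs_def)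
  show ?thesis
  proof (cases "(P,Q) \<in> invs d w")
    case True
    hence "(P,Q) \<notin> invs d ?v" using flip by blast
    hence "invs d ?v = invs d w - {(P,Q)}" using eq by blast
    hence "card (invs d ?v) = card (invs d w) - 1" using True by (simp add: card_Diff_singleton)
    thus ?thesis unfolding ninv_def using True by presburger
  next
    case False
    hence "(P,Q) \<in> invs d ?v" using flip by blast
    hence "invs d ?v = insert (P,Q) (invs d w)" using eq False by blast
    hence "card (invs d ?v) = card (invs d w) + 1" using False invs_finite[of d w] by simp
    thus ?thesis unfolding ninv_def using False by presburger
  qed
qed

lemma inv_right:
  assumes p: "p \<in> {1..d}" "Suc p \<in> {1..d}" and lt: "w p < w (Suc p)"
  shows "ninv d (w \<circ> transpose p (Suc p)) = ninv d w + 1"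
proof -
  let ?t = "transpose p (Suc p)"
  let ?v = "w \<circ> ?t"
  let ?f = "\<lambda>(x,y). (?t x, ?t y)"
  have tD: "x \<in> {1..d} \<Longrightarrow> ?t x \<in> {1..d}" for x using p by (auto simp: transpose_def)
  have tlt: "x < y \<Longrightarrow> (x,y) \<noteq> (p, Suc p) \<Longrightarrow> ?t x < ?t y" for x y
    by (auto simp: transpose_def)
  have eq: "invs d ?v - {(p, Suc p)} = ?f ` (invs d w - {(p, Suc p)})"
  proof (intro set_eqI iffI)
    fix z assume z: "z \<in> invs d ?v - {(p, Suc p)}"
    obtain x y where xy: "z = (x,y)" by (cases z)
    have x: "x \<in> {1..d}" and y: "y \<in> {1..d}" and xl: "x < y" and ne: "(x,y) \<noteq> (p, Suc p)"
      and wl: "w (?t y) < w (?t x)"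
      using z xy by (auto simp: invs_def)
    have "(?t x, ?t y) \<in> invs d w - {(p, Suc p)}"
      using tD[OF x] tD[OF y] tlt[OF xl ne] wl xl by (auto simp: invs_def transpose_def split: if_splits)
    moreover have "z = ?f (?t x, ?t y)" using xy by simp
    ultimately show "z \<in> ?f ` (invs d w - {(p, Suc p)})" by blast
  next
    fix z assume "z \<in> ?f ` (invs d w - {(p, Suc p)})"
    then obtain x y where z: "z = (?t x, ?t y)" and xy: "(x,y) \<in> invs d w" "(x,y) \<noteq> (p, Suc p)"
      by auto
    have x: "x \<in> {1..d}" and y: "y \<in> {1..d}" and xl: "x < y" and wl: "w y < w x"
      using xy by (auto simp: invs_def)
    have "?t x < ?t y" using tlt[OF xl xy(2)] .
    moreover have "(?t x, ?t y) \<noteq> (p, Suc p)" using xl by (auto simp: transpose_def split: if_splits)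
    ultimately show "z \<in> invs d ?v - {(p, Suc p)}" using z tD[OF x] tD[OF y] wl
      by (auto simp: invs_def)
  qed
  have inj: "inj_on ?f (invs d w - {(p, Suc p)})"
    by (rule inj_onI) (auto simp: transpose_def split: if_splits)
  have in1: "(p, Suc p) \<in> invs d ?v" using p lt by (auto simp: invs_def)
  have in2: "(p, Suc p) \<notin> invs d w" using lt by (auto simp: invs_def)
  have ins: "invs d ?v = insert (p, Suc p) (invs d ?v - {(p, Suc p)})" using in1 by blast
  have "card (invs d ?v) = card (invs d ?v - {(p, Suc p)}) + 1"
    by (subst ins, subst card_insert_disjoint) (use invs_finite[of d ?v] in auto)
  also have "card (invs d ?v - {(p, Suc p)}) = card (invs d w - {(p, Suc p)})"
    unfolding eq by (rule card_image[OF inj])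
  also have "\<dots> = card (invs d w)" using in2 by simp
  finally show ?thesis unfolding ninv_def .
qed

lemma adj_inv:
  assumes w: "w permutes {1..d}" and xy: "(x,y) \<in> invs d w"
  shows "\<exists>P Q. P \<in> {1..d} \<and> Q \<in> {1..d} \<and> P < Q \<and> w P = Suc (w Q)"
proof -
  have "\<forall>x y. (x,y) \<in> invs d w \<longrightarrow> w x - w y = k \<longrightarrow>
          (\<exists>P Q. P \<in> {1..d} \<and> Q \<in> {1..d} \<and> P < Q \<and> w P = Suc (w Q))" for k
  proof (induction k rule: less_induct)
    case (less k)
    show ?case
    proof (intro allI impI)
      fix x y assume xy: "(x,y) \<in> invs d w" and k: "w x - w y = k"
      have x: "x \<in> {1..d}" and y: "y \<in> {1..d}" and xl: "x < y" and wl: "w y < w x"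
        using xy by (auto simp: invs_def)
      show "\<exists>P Q. P \<in> {1..d} \<and> Q \<in> {1..d} \<and> P < Q \<and> w P = Suc (w Q)"
      proof (cases "w x = Suc (w y)")
        case True thus ?thesis using x y xl by blast
      next
        case False
        let ?v = "Suc (w y)"
        have wxD: "w x \<in> {1..d}" using perm_D[OF w x] .
        have vD: "?v \<in> {1..d}" using wxD wl by auto
        obtain r where r: "r \<in> {1..d}" "w r = ?v"
          using vD permutes_image[OF w] by (metis imageE)
        show ?thesis
        proof (cases "r < y")
          case True thus ?thesis using r y by blast
        next
          case False
          have "r \<noteq> y" using r by auto
          hence ry: "y < r" using False by simp
          have "(x, r) \<in> invs d w" using x r xl ry wl False \<open>\<not> w x = Suc (w y)\<close>
            by (auto simp: invs_def)
          moreover have "w x - w r < k" using k r wl by auto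
          ultimately show ?thesis using less.IH by blast
        qed
      qed
    qed
  qed
  thus ?thesis using xy by blast
qed

lemma noinv_id:
  assumes w: "w permutes {1..d}" and e: "invs d w = {}"
  shows "w = id"
proof -
  have inj: "inj w" using w by (rule permutes_inj)
  have "\<forall>x. x \<in> {1..d} \<longrightarrow> w x = x" 
  proof (intro allI)
    fix x show "x \<in> {1..d} \<longrightarrow> w x = x"
    proof (induction x rule: less_induct)
      case (less x)
      show ?case
      proof
        assume x: "x \<in> {1..d}"
        have wxD: "w x \<in> {1..d}" using perm_D[OF w x] .
        show "w x = x"
        proof (rule ccontr)
          assume ne: "w x \<noteq> x"
          show False
          proof (cases "w x < x")
            case True
            hence "w (w x) = w x" using less.IH wxD by blast
            hence "w x = x" using inj by (auto dest: injD)
            thus False using ne by simp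
          next
            case False
            hence gt: "x < w x" using ne by simp
            obtain z where z: "z \<in> {1..d}" "w z = x"
              using x permutes_image[OF w] by (metis imageE)
            have "z \<noteq> x" using z ne by auto
            show False
            proof (cases "z < x")
              case True
              hence "w z = z" using less.IH z by blast
              thus False using z True by simp
            next
              case False
              hence "x < z" using \<open>z \<noteq> x\<close> by simp
              hence "(x,z) \<in> invs d w" using x z gt by (auto simp: invs_def)
              thus False using e by simp
            qed
          qed
        qed
      qed
    qed
  qed
  moreover have "\<forall>x. x \<notin> {1..d} \<longrightarrow> w x = x" using w by (simp add: permutes_not_in)
  ultimately show ?thesis by (auto simp: fun_eq_iff)
qed

abbreviation FF :: "nat \<Rightarrow> (nat \<Rightarrow> nat) \<Rightarrow> nat \<Rightarrow> nat" where
  "FF \<equiv> (\<lambda>s f. transpose s (Suc s) \<circ> f)"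

lemma foldr_perm:
  "set ss \<subseteq> {1..<d} \<Longrightarrow> foldr FF ss id permutes {1..d} \<and> ninv d (foldr FF ss id) \<le> length ss"
proof (induction ss)
  case Nil
  have "invs d (\<lambda>a. a) = {}" by (auto simp: invs_def)
  moreover have "(\<lambda>a. a) permutes {1..d}" using permutes_id by (simp add: id_def)
  ultimately show ?case by (simp add: ninv_def)
next
  case (Cons s ss)
  let ?f = "foldr FF ss id"
  have "set ss \<subseteq> {1..<d}" using Cons.prems by simp
  note ih = Cons.IH[OF this]
  have f: "?f permutes {1..d}" and nf: "ninv d ?f \<le> length ss" using ih by blast+
  have s: "s \<in> {1..d}" "Suc s \<in> {1..d}" using Cons.prems by auto
  have perm: "transpose s (Suc s) \<circ> ?f permutes {1..d}"
    by (rule permutes_compose[OF f permutes_swap_id[OF s]])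
  define P0 where "P0 = inv ?f s"
  define Q0 where "Q0 = inv ?f (Suc s)"
  have fi: "inv ?f permutes {1..d}" by (rule permutes_inv[OF f])
  have P0: "P0 \<in> {1..d}" "?f P0 = s" unfolding P0_def
    using perm_D[OF fi s(1)] permutes_inverses(1)[OF f] by auto
  have Q0: "Q0 \<in> {1..d}" "?f Q0 = Suc s" unfolding Q0_def
    using perm_D[OF fi s(2)] permutes_inverses(1)[OF f] by auto
  have ne: "P0 \<noteq> Q0" using P0 Q0 by auto
  have inj: "inj_on ?f {1..d}" using permutes_inj[OF f] by (simp add: inj_on_def inj_def)
  have "ninv d (transpose s (Suc s) \<circ> ?f) \<le> ninv d ?f + 1"
  proof (cases "P0 < Q0")
    case True
    show ?thesis using inv_left[OF inj P0(1) Q0(1) True, of s] P0 Q0 by auto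
  next
    case False
    hence lt: "Q0 < P0" using ne by simp
    show ?thesis using inv_left[OF inj Q0(1) P0(1) lt, of s] P0 Q0 by auto
  qed
  moreover have e: "foldr FF (s # ss) id = transpose s (Suc s) \<circ> ?f" by simp
  ultimately show ?case using perm nf by (simp only: e length_Cons) (intro conjI TrueI; linarith)
qed

lemma exists_word:
  "w permutes {1..d} \<Longrightarrow> \<exists>ss. length ss = ninv d w \<and> set ss \<subseteq> {1..<d} \<and> w = foldr FF ss id"
proof (induction "ninv d w" arbitrary: w)
  case 0
  have "invs d w = {}" using 0 invs_finite[of d w] by (simp add: ninv_def)
  hence "w = id" using noinv_id[OF 0(2)] by simp
  thus ?case using 0 by (intro exI[of _ "[]"]) simp
next
  case (Suc k)
  have "invs d w \<noteq> {}" using Suc.hyps(2) by (auto simp: ninv_def)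
  then obtain x y where "(x,y) \<in> invs d w" by auto
  then obtain P Q where PQ: "P \<in> {1..d}" "Q \<in> {1..d}" "P < Q" "w P = Suc (w Q)"
    using adj_inv[OF Suc.prems] by blast
  let ?t = "w Q"
  have wQ: "w Q \<in> {1..d}" by (rule perm_D[OF Suc.prems PQ(2)])
  have wP: "w P \<in> {1..d}" by (rule perm_D[OF Suc.prems PQ(1)])
  have tD: "?t \<in> {1..d}" "Suc ?t \<in> {1..d}" using wQ wP PQ(4) by simp_all
  have inj: "inj_on w {1..d}" using permutes_inj[OF Suc.prems] by (simp add: inj_on_def inj_def)
  have inPQ: "(P,Q) \<in> invs d w" using PQ by (auto simp: invs_def)
  let ?v = "transpose ?t (Suc ?t) \<circ> w"
  have nv: "ninv d ?v = k"
    using inv_left[OF inj PQ(1) PQ(2) PQ(3), of ?t] PQ inPQ Suc.hyps(2) by auto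
  have pv: "?v permutes {1..d}" by (rule permutes_compose[OF Suc.prems permutes_swap_id[OF tD]])
  obtain ss where ss: "length ss = k" "set ss \<subseteq> {1..<d}" "?v = foldr FF ss id"
    using Suc.hyps(1)[OF nv[symmetric] pv] nv by auto
  have "w = transpose ?t (Suc ?t) \<circ> ?v" by (simp add: fun_eq_iff)
  hence "w = foldr FF (?t # ss) id" using ss(3) by simp
  moreover have "set (?t # ss) \<subseteq> {1..<d}" using ss(2) tD by auto
  ultimately show ?case using ss(1) Suc.hyps(2) by (intro exI[of _ "?t # ss"]) simp
qed

lemma clen_eq: assumes w: "w permutes {1..d}" shows "clen d w = ninv d w"
  unfolding clen_def
proof (rule Least_equality)
  show "\<exists>ss. length ss = ninv d w \<and> set ss \<subseteq> {1..<d} \<and> w = foldr FF ss id"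
    using exists_word[OF w] .
next
  fix k assume "\<exists>ss. length ss = k \<and> set ss \<subseteq> {1..<d} \<and> w = foldr FF ss id"
  then obtain ss where "length ss = k" "set ss \<subseteq> {1..<d}" "w = foldr FF ss id" by auto
  thus "ninv d w \<le> k" using foldr_perm[of ss d] by auto
qed



lemma siginv_less: "x < y \<Longrightarrow> siginv a x < siginv a y"
  unfolding siginv_def by auto

lemma siginv_D: "y \<in> {1..d-1} \<Longrightarrow> a \<in> {1..d} \<Longrightarrow> siginv a y \<in> {1..d}"
  unfolding siginv_def by auto

lemma sig_D: "u \<in> {1..d} \<Longrightarrow> v \<in> {1..d} \<Longrightarrow> u \<noteq> v \<Longrightarrow> sig v u \<in> {1..d-1}"
  unfolding sig_def by auto

lemma hat_apply: "x \<noteq> a \<Longrightarrow> hat w a (sig a x) = sig (w a) (w x)"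
  by (simp add: hat_def)

lemma hat_apply': "hat w a y = sig (w a) (w (siginv a y))"
  by (simp add: hat_def)

lemma perm_inj_eq: "w permutes S \<Longrightarrow> w x = w y \<longleftrightarrow> x = y"
  using permutes_inj[of w S] by (auto dest: injD)

lemma recon: "w permutes S \<Longrightarrow> x \<noteq> a \<Longrightarrow> w x = siginv (w a) (hat w a (sig a x))"
  by (simp add: hat_apply perm_inj_eq)

lemma hat_perm:
  assumes w: "w permutes {1..d}" and a: "a \<in> {1..d}"
  shows "hat w a permutes {1..d-1}"
proof (rule inj_imp_permutes)
  show "finite {1..d-1}" by simp
next
  show "inj_on (hat w a) {1..d-1}"
  proof (rule inj_onI)
    fix y1 y2 assume "hat w a y1 = hat w a y2"
    hence "sig (w a) (w (siginv a y1)) = sig (w a) (w (siginv a y2))" by (simp add: hat_apply')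
    moreover have "w (siginv a y1) \<noteq> w a" "w (siginv a y2) \<noteq> w a" by (simp_all add: perm_inj_eq[OF w])
    ultimately have "w (siginv a y1) = w (siginv a y2)" by (simp add: sig_inj)
    hence "siginv a y1 = siginv a y2" by (simp add: perm_inj_eq[OF w])
    hence "sig a (siginv a y1) = sig a (siginv a y2)" by simp
    thus "y1 = y2" by simp
  qed
next
  fix y assume y: "y \<in> {1..d-1}"
  have s: "siginv a y \<in> {1..d}" by (rule siginv_D[OF y a])
  have "w (siginv a y) \<in> {1..d}" by (rule perm_D[OF w s])
  moreover have "w a \<in> {1..d}" by (rule perm_D[OF w a])
  moreover have "w (siginv a y) \<noteq> w a" by (simp add: perm_inj_eq[OF w])
  ultimately show "hat w a y \<in> {1..d-1}" unfolding hat_apply' by (rule sig_D)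
next
  fix y assume y: "y \<notin> {1..d-1}"
  have wa: "w a \<in> {1..d}" by (rule perm_D[OF w a])
  show "hat w a y = y"
  proof (cases "y = 0")
    case True
    have "siginv a y = 0" using True a by (simp add: siginv_def)
    moreover have "w 0 = 0" using w by (simp add: permutes_not_in)
    ultimately show ?thesis using True wa by (simp add: hat_apply' sig_def)
  next
    case False
    hence yd: "y \<ge> d" using y by auto
    have "siginv a y = Suc y" using yd a by (simp add: siginv_def)
    moreover have "w (Suc y) = Suc y" using w yd by (simp add: permutes_not_in)
    ultimately show ?thesis using yd wa by (simp add: hat_apply' sig_def)
  qed
qed

lemma card_minus_img:
  assumes "finite A" "v \<notin> A - {v}"
  shows "card (sig v ` (A - {v})) = card (A - {v})"
  by (rule card_image, rule inj_on_subset[OF sig_inj_on]) auto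

lemma psi_hat:
  assumes w: "w permutes {1..d}" and a: "a \<in> Blk b i" and i: "i \<in> {1..n}"
    and wa: "w a \<in> Blk c j" and j: "j \<in> {1..n'}"
  shows "psi n n' (b(i := b i - 1)) (c(j := c j - 1)) (hat w a)
       = (psi n n' b c w)(i := (psi n n' b c w i)(j := psi n n' b c w i j - 1))"
proof (intro ext)
  fix i' j'
  let ?b = "b(i := b i - 1)" and ?c = "c(j := c j - 1)"
  show "psi n n' ?b ?c (hat w a) i' j' = ((psi n n' b c w)(i := (psi n n' b c w i)(j := psi n n' b c w i j - 1))) i' j'"
  proof (cases "i' \<in> {1..n} \<and> j' \<in> {1..n'}")
    case False
    thus ?thesis using i j by (auto simp: psi_def)
  next
    case True
    let ?A = "w ` Blk b i' \<inter> Blk c j'"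
    have seteq: "hat w a ` Blk ?b i' \<inter> Blk ?c j' = sig (w a) ` (?A - {w a})"
    proof (intro set_eqI iffI)
      fix z assume "z \<in> hat w a ` Blk ?b i' \<inter> Blk ?c j'"
      then obtain y where y: "y \<in> Blk ?b i'" "z = hat w a y" and z: "z \<in> Blk ?c j'" by auto
      let ?x = "siginv a y"
      have x: "?x \<in> Blk b i'" using y(1) Blk_red'[OF a] by simp
      have zz: "z = sig (w a) (w ?x)" using y(2) by (simp add: hat_apply')
      have ne: "w ?x \<noteq> w a" by (simp add: perm_inj_eq[OF w])
      have "w ?x \<in> Blk c j'" using z zz Blk_red[OF wa ne] by simp
      thus "z \<in> sig (w a) ` (?A - {w a})" using x zz ne by blast
    next
      fix z assume "z \<in> sig (w a) ` (?A - {w a})"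
      then obtain x where x: "x \<in> Blk b i'" "w x \<in> Blk c j'" "w x \<noteq> w a" and z: "z = sig (w a) (w x)"
        by auto
      have xa: "x \<noteq> a" using x(3) by auto
      have "sig a x \<in> Blk ?b i'" using Blk_red[OF a xa] x(1) by simp
      moreover have "hat w a (sig a x) = z" using z xa by (simp add: hat_apply)
      moreover have "z \<in> Blk ?c j'" using Blk_red[OF wa x(3)] x(2) z by simp
      ultimately show "z \<in> hat w a ` Blk ?b i' \<inter> Blk ?c j'" by blast
    qed
    have fin: "finite ?A" using Blk_finite by blast
    have c1: "card (hat w a ` Blk ?b i' \<inter> Blk ?c j') = card (?A - {w a})"
      unfolding seteq by (rule card_image, rule inj_on_subset[OF sig_inj_on]) auto
    have inA: "w a \<in> ?A \<longleftrightarrow> i' = i \<and> j' = j"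
    proof
      assume "w a \<in> ?A"
      then obtain x where "x \<in> Blk b i'" "w x = w a" "w a \<in> Blk c j'" by auto
      hence "a \<in> Blk b i'" "w a \<in> Blk c j'" by (auto simp: perm_inj_eq[OF w])
      thus "i' = i \<and> j' = j" using Blk_disj a wa by blast
    next
      assume "i' = i \<and> j' = j" thus "w a \<in> ?A" using a wa by auto
    qed
    have "card (?A - {w a}) = card ?A - (if w a \<in> ?A then 1 else 0)"
      using fin by (simp add: card_Diff_singleton_if)
    thus ?thesis using True c1 inA by (auto simp: psi_def)
  qed
qed

definition good :: "nat \<Rightarrow> (nat \<Rightarrow> nat) \<Rightarrow> (nat \<Rightarrow> nat) \<Rightarrow> (nat \<Rightarrow> nat) \<Rightarrow> bool" where
  "good d b c w \<longleftrightarrow> w permutes {1..d} \<and>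
     (\<forall>x\<in>{1..d}. \<forall>y\<in>{1..d}. x < y \<longrightarrow>
        ((\<exists>i. x \<in> Blk b i \<and> y \<in> Blk b i) \<or> (\<exists>j. w x \<in> Blk c j \<and> w y \<in> Blk c j)) \<longrightarrow> w y < w x)"

lemma good_hat:
  assumes g: "good d b c w" and a: "a \<in> Blk b i" and aD: "a \<in> {1..d}" and wa: "w a \<in> Blk c j"
  shows "good (d-1) (b(i := b i - 1)) (c(j := c j - 1)) (hat w a)"
proof -
  have w: "w permutes {1..d}" using g by (simp add: good_def)
  have p: "hat w a permutes {1..d-1}" by (rule hat_perm[OF w aD])
  have main: "hat w a y' < hat w a x'"
    if x': "x' \<in> {1..d-1}" and y': "y' \<in> {1..d-1}" and lt: "x' < y'"
      and h: "(\<exists>i'. x' \<in> Blk (b(i := b i - 1)) i' \<and> y' \<in> Blk (b(i := b i - 1)) i') \<or>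
              (\<exists>j'. hat w a x' \<in> Blk (c(j := c j - 1)) j' \<and> hat w a y' \<in> Blk (c(j := c j - 1)) j')"
    for x' y'
  proof -
    let ?x = "siginv a x'" and ?y = "siginv a y'"
    have xD: "?x \<in> {1..d}" and yD: "?y \<in> {1..d}" using siginv_D x' y' aD by auto
    have xy: "?x < ?y" using siginv_less[OF lt] .
    have nx: "w ?x \<noteq> w a" and ny: "w ?y \<noteq> w a" by (simp_all add: perm_inj_eq[OF w])
    have "(\<exists>i'. ?x \<in> Blk b i' \<and> ?y \<in> Blk b i') \<or> (\<exists>j'. w ?x \<in> Blk c j' \<and> w ?y \<in> Blk c j')"
      using h Blk_red'[OF a] Blk_red[OF wa nx] Blk_red[OF wa ny] by (simp add: hat_apply')
    moreover have "\<forall>x\<in>{1..d}. \<forall>y\<in>{1..d}. x < y \<longrightarrow>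
        ((\<exists>i. x \<in> Blk b i \<and> y \<in> Blk b i) \<or> (\<exists>j. w x \<in> Blk c j \<and> w y \<in> Blk c j)) \<longrightarrow> w y < w x"
      using g unfolding good_def by blast
    ultimately have "w ?y < w ?x" using xD yD xy by blast
    thus ?thesis using nx ny by (simp add: hat_apply' sig_less)
  qed
  show ?thesis unfolding good_def using p main by blast
qed

lemma ninv_hat:
  assumes w: "w permutes {1..d}" and aD: "a \<in> {1..d}"
  shows "ninv d w = ninv (d-1) (hat w a) + card {x\<in>{1..d}. x < a \<and> w a < w x}
                     + card {y\<in>{1..d}. a < y \<and> w y < w a}"
proof -
  let ?Pa = "{z \<in> invs d w. fst z = a \<or> snd z = a}"
  let ?A1 = "{x\<in>{1..d}. x < a \<and> w a < w x}" and ?A2 = "{y\<in>{1..d}. a < y \<and> w y < w a}"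
  let ?f = "\<lambda>(x,y). (sig a x, sig a y)"
  have pa: "?Pa = (\<lambda>x. (x,a)) ` ?A1 \<union> (\<lambda>y. (a,y)) ` ?A2"
    using aD by (auto simp: invs_def)
  have cpa: "card ?Pa = card ?A1 + card ?A2"
    unfolding pa by (subst card_Un_disjoint) (auto simp: card_image inj_on_def)
  have rest: "?f ` (invs d w - ?Pa) = invs (d-1) (hat w a)"
  proof (intro set_eqI iffI)
    fix z assume "z \<in> ?f ` (invs d w - ?Pa)"
    then obtain p where p: "p \<in> invs d w - ?Pa" "z = ?f p" by blast
    obtain x y where pxy: "p = (x,y)" by (cases p)
    have z: "z = (sig a x, sig a y)" and xy: "(x,y) \<in> invs d w" "x \<noteq> a" "y \<noteq> a"
      using p pxy by auto
    have x: "x \<in> {1..d}" and y: "y \<in> {1..d}" and lt: "x < y" and wl: "w y < w x"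
      using xy by (auto simp: invs_def)
    have nx: "w x \<noteq> w a" and ny: "w y \<noteq> w a" using xy by (simp_all add: perm_inj_eq[OF w])
    have "sig a x \<in> {1..d-1}" "sig a y \<in> {1..d-1}" using sig_D x y aD xy by auto
    moreover have "sig a x < sig a y" using sig_less xy lt by simp
    moreover have "hat w a (sig a y) < hat w a (sig a x)"
      using xy nx ny wl by (simp add: hat_apply sig_less)
    ultimately show "z \<in> invs (d-1) (hat w a)" using z by (simp add: invs_def)
  next
    fix z assume "z \<in> invs (d-1) (hat w a)"
    then obtain x' y' where z: "z = (x',y')" and x': "x' \<in> {1..d-1}" and y': "y' \<in> {1..d-1}"
      and lt: "x' < y'" and hl: "hat w a y' < hat w a x'"
      by (auto simp: invs_def)
    let ?x = "siginv a x'" and ?y = "siginv a y'"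
    have nx: "w ?x \<noteq> w a" and ny: "w ?y \<noteq> w a" by (simp_all add: perm_inj_eq[OF w])
    have "(?x, ?y) \<in> invs d w"
      using siginv_D[OF x' aD] siginv_D[OF y' aD] siginv_less[OF lt] hl nx ny
      by (simp add: invs_def hat_apply' sig_less)
    moreover have "(?x, ?y) \<notin> ?Pa" by simp
    moreover have "z = ?f (?x, ?y)" using z by simp
    ultimately show "z \<in> ?f ` (invs d w - ?Pa)" by blast
  qed
  have inj: "inj_on ?f (invs d w - ?Pa)"
    by (rule inj_onI) (auto simp: sig_inj)
  have "card (invs d w) = card ?Pa + card (invs d w - ?Pa)"
  proof -
    have "card ?Pa \<le> card (invs d w)" using invs_finite[of d w] by (intro card_mono) auto
    moreover have "card (invs d w - ?Pa) = card (invs d w) - card ?Pa"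
      using invs_finite[of d w] by (intro card_Diff_subset) auto
    ultimately show ?thesis by simp
  qed
  also have "card (invs d w - ?Pa) = ninv (d-1) (hat w a)"
    unfolding ninv_def rest[symmetric] by (rule card_image[OF inj, symmetric])
  finally show ?thesis unfolding ninv_def cpa by simp
qed



lemma card_blocks:
  assumes w: "w permutes {1..d}" and I: "I \<subseteq> {1..n}" "finite I" and J: "J \<subseteq> {1..n'}" "finite J"
  shows "card (\<Union>i'\<in>I. \<Union>j'\<in>J. {x \<in> Blk b i'. w x \<in> Blk c j'}) = (\<Sum>i'\<in>I. \<Sum>j'\<in>J. psi n n' b c w i' j')"
proof -
  have fin: "finite {x \<in> Blk b i'. w x \<in> Blk c j'}" for i' j' using Blk_finite by simp
  have inner: "card (\<Union>j'\<in>J. {x \<in> Blk b i'. w x \<in> Blk c j'}) = (\<Sum>j'\<in>J. card {x \<in> Blk b i'. w x \<in> Blk c j'})" for i'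
    by (rule card_UN_disjoint[OF J(2)]) (auto simp: fin dest: Blk_disj)
  have outer: "card (\<Union>i'\<in>I. \<Union>j'\<in>J. {x \<in> Blk b i'. w x \<in> Blk c j'}) =
      (\<Sum>i'\<in>I. card (\<Union>j'\<in>J. {x \<in> Blk b i'. w x \<in> Blk c j'}))"
    by (rule card_UN_disjoint[OF I(2)]) (auto simp: fin J(2) dest: Blk_disj)
  have each: "card {x \<in> Blk b i'. w x \<in> Blk c j'} = psi n n' b c w i' j'" if "i' \<in> I" "j' \<in> J" for i' j'
  proof -
    have "w ` Blk b i' \<inter> Blk c j' = w ` {x \<in> Blk b i'. w x \<in> Blk c j'}" by auto
    moreover have "card (w ` {x \<in> Blk b i'. w x \<in> Blk c j'}) = card {x \<in> Blk b i'. w x \<in> Blk c j'}"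
      by (rule card_image, rule inj_on_subset[OF permutes_inj[OF w, unfolded inj_def[symmetric]]]) auto
    ultimately show ?thesis using that I J by (auto simp: psi_def)
  qed
  show ?thesis unfolding outer inner using each by (intro sum.cong refl) auto
qed

lemma good_D: "good d b c w \<Longrightarrow> x \<in> {1..d} \<Longrightarrow> y \<in> {1..d} \<Longrightarrow> x < y \<Longrightarrow>
   (\<exists>i. x \<in> Blk b i \<and> y \<in> Blk b i) \<or> (\<exists>j. w x \<in> Blk c j \<and> w y \<in> Blk c j) \<Longrightarrow> w y < w x"
  unfolding good_def by blast

lemma good_perm: "good d b c w \<Longrightarrow> w permutes {1..d}"
  unfolding good_def by blast

lemma count_left:
  assumes g: "good d b c w" and nb: "PS b n = d" and nc: "PS c n' = d"
    and i: "i \<in> {1..n}" and j: "j \<in> {1..n'}" and a: "a \<in> Blk b i" and wa: "w a \<in> Blk c j"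
  shows "card {x\<in>{1..d}. x < a \<and> w a < w x} = msLG n' (psi n n' b c w) (i-1) j + card {x \<in> Blk b i. x < a}"
proof -
  have w: "w permutes {1..d}" using g by (rule good_perm)
  let ?U = "\<Union>i'\<in>{1..i-1}. \<Union>j'\<in>{j..n'}. {x \<in> Blk b i'. w x \<in> Blk c j'}"
  have seteq: "{x\<in>{1..d}. x < a \<and> w a < w x} = ?U \<union> {x \<in> Blk b i. x < a}"
  proof (intro set_eqI iffI)
    fix x assume x: "x \<in> {x\<in>{1..d}. x < a \<and> w a < w x}"
    obtain i' where i': "i' \<in> {1..n}" "x \<in> Blk b i'" using Blk_cover[of x b n] x nb by auto
    have "\<not> i < i'" using Blk_order[OF a i'(2)] x by auto
    hence "i' < i \<or> i' = i" by auto
    thus "x \<in> ?U \<union> {x \<in> Blk b i. x < a}"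
    proof
      assume lt: "i' < i"
      have "w x \<in> {1..PS c n'}" using perm_D[OF w] x nc by auto
      then obtain j' where j': "j' \<in> {1..n'}" "w x \<in> Blk c j'" using Blk_cover by blast
      have "\<not> j' < j" using Blk_order[OF j'(2) wa] x by auto
      hence "j' \<in> {j..n'}" using j' by auto
      moreover have "i' \<in> {1..i-1}" using lt i' by auto
      ultimately show ?thesis using i' j' by blast
    next
      assume "i' = i" thus ?thesis using i' x by auto
    qed
  next
    fix x assume x: "x \<in> ?U \<union> {x \<in> Blk b i. x < a}"
    show "x \<in> {x\<in>{1..d}. x < a \<and> w a < w x}"
    proof (cases "x \<in> ?U")
      case True
      then obtain i' j' where i': "i' \<in> {1..i-1}" and j': "j' \<in> {j..n'}" and xb: "x \<in> Blk b i'"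
        and xc: "w x \<in> Blk c j'" by auto
      have "i' \<in> {1..n}" using i' i by auto
      hence xD: "x \<in> {1..d}" using Blk_sub[of i' n b] xb nb by blast
      have xa: "x < a" using Blk_order[OF xb a] i' by auto
      have "w a < w x"
      proof (cases "j = j'")
        case True
        thus ?thesis using good_D[OF g xD _ xa] xc wa Blk_sub[of i n b] i a nb by blast
      next
        case False
        thus ?thesis using Blk_order[OF wa xc] j' by auto
      qed
      thus ?thesis using xD xa by auto
    next
      case False
      hence xb: "x \<in> Blk b i" "x < a" using x by auto
      have xD: "x \<in> {1..d}" and aD: "a \<in> {1..d}" using Blk_sub[of i n b] i xb a nb by auto
      have "w a < w x" using good_D[OF g xD aD xb(2)] xb a by blast
      thus ?thesis using xD xb by auto
    qed
  qed
  have disj: "?U \<inter> {x \<in> Blk b i. x < a} = {}"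
  proof -
    { fix x assume "x \<in> ?U" "x \<in> Blk b i"
      then obtain i' where "i' \<in> {1..i-1}" "x \<in> Blk b i'" by auto
      hence False using Blk_disj \<open>x \<in> Blk b i\<close> by fastforce }
    thus ?thesis by blast
  qed
  have finU: "finite ?U" using Blk_finite by auto
  have "card ({x\<in>{1..d}. x < a \<and> w a < w x}) = card ?U + card {x \<in> Blk b i. x < a}"
    unfolding seteq by (rule card_Un_disjoint[OF finU _ disj]) (simp add: Blk_finite)
  also have "card ?U = msLG n' (psi n n' b c w) (i-1) j"
    unfolding msLG_def using i j by (intro card_blocks[OF w]) auto
  finally show ?thesis .
qed

lemma count_right:
  assumes g: "good d b c w" and nb: "PS b n = d" and nc: "PS c n' = d"
    and i: "i \<in> {1..n}" and j: "j \<in> {1..n'}" and a: "a \<in> Blk b i" and wa: "w a \<in> Blk c j"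
  shows "card {x\<in>{1..d}. a < x \<and> w x < w a} = msGL n (psi n n' b c w) (i+1) j + card {x \<in> Blk b i. a < x}"
proof -
  have w: "w permutes {1..d}" using g by (rule good_perm)
  let ?U = "\<Union>i'\<in>{i+1..n}. \<Union>j'\<in>{1..j}. {x \<in> Blk b i'. w x \<in> Blk c j'}"
  have seteq: "{x\<in>{1..d}. a < x \<and> w x < w a} = ?U \<union> {x \<in> Blk b i. a < x}"
  proof (intro set_eqI iffI)
    fix x assume x: "x \<in> {x\<in>{1..d}. a < x \<and> w x < w a}"
    obtain i' where i': "i' \<in> {1..n}" "x \<in> Blk b i'" using Blk_cover[of x b n] x nb by auto
    have "\<not> i' < i" using Blk_order[OF i'(2) a] x by auto
    hence "i < i' \<or> i' = i" by auto
    thus "x \<in> ?U \<union> {x \<in> Blk b i. a < x}"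
    proof
      assume lt: "i < i'"
      have "w x \<in> {1..PS c n'}" using perm_D[OF w] x nc by auto
      then obtain j' where j': "j' \<in> {1..n'}" "w x \<in> Blk c j'" using Blk_cover by blast
      have "\<not> j < j'" using Blk_order[OF wa j'(2)] x by auto
      hence "j' \<in> {1..j}" using j' by auto
      moreover have "i' \<in> {i+1..n}" using lt i' by auto
      ultimately show ?thesis using i' j' by blast
    next
      assume "i' = i" thus ?thesis using i' x by auto
    qed
  next
    fix x assume x: "x \<in> ?U \<union> {x \<in> Blk b i. a < x}"
    show "x \<in> {x\<in>{1..d}. a < x \<and> w x < w a}"
    proof (cases "x \<in> ?U")
      case True
      then obtain i' j' where i': "i' \<in> {i+1..n}" and j': "j' \<in> {1..j}" and xb: "x \<in> Blk b i'"
        and xc: "w x \<in> Blk c j'" by auto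
      have "i' \<in> {1..n}" using i' i by auto
      hence xD: "x \<in> {1..d}" using Blk_sub[of i' n b] xb nb by blast
      have xa: "a < x" using Blk_order[OF a xb] i' by auto
      have aD: "a \<in> {1..d}" using Blk_sub[of i n b] i a nb by auto
      have "w x < w a"
      proof (cases "j = j'")
        case True
        thus ?thesis using good_D[OF g aD xD xa] xc wa by blast
      next
        case False
        thus ?thesis using Blk_order[OF xc wa] j' by auto
      qed
      thus ?thesis using xD xa by auto
    next
      case False
      hence xb: "x \<in> Blk b i" "a < x" using x by auto
      have xD: "x \<in> {1..d}" and aD: "a \<in> {1..d}" using Blk_sub[of i n b] i xb a nb by auto
      have "w x < w a" using good_D[OF g aD xD xb(2)] xb a by blast
      thus ?thesis using xD xb by auto
    qed
  qed
  have disj: "?U \<inter> {x \<in> Blk b i. a < x} = {}"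
  proof -
    { fix x assume "x \<in> ?U" "x \<in> Blk b i"
      then obtain i' where "i' \<in> {i+1..n}" "x \<in> Blk b i'" by auto
      hence False using Blk_disj \<open>x \<in> Blk b i\<close> by fastforce }
    thus ?thesis by blast
  qed
  have finU: "finite ?U" using Blk_finite by auto
  have "card ({x\<in>{1..d}. a < x \<and> w x < w a}) = card ?U + card {x \<in> Blk b i. a < x}"
    unfolding seteq by (rule card_Un_disjoint[OF finU _ disj]) (simp add: Blk_finite)
  also have "card ?U = msGL n (psi n n' b c w) (i+1) j"
    unfolding msGL_def using i j by (intro card_blocks[OF w]) auto
  finally show ?thesis .
qed

lemma count_mid:
  assumes a: "a \<in> Blk b i"
  shows "card {x \<in> Blk b i. x < a} + card {x \<in> Blk b i. a < x} = b i - 1"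
proof -
  have i1: "i \<ge> 1" using Blk_ne[OF a] by simp
  have e: "Blk b i - {a} = {x \<in> Blk b i. x < a} \<union> {x \<in> Blk b i. a < x}" by auto
  have "card ({x \<in> Blk b i. x < a} \<union> {x \<in> Blk b i. a < x}) = card {x \<in> Blk b i. x < a} + card {x \<in> Blk b i. a < x}"
    by (rule card_Un_disjoint) (auto simp: Blk_finite)
  moreover have "card (Blk b i - {a}) = card (Blk b i) - 1" using a by (rule card_Diff_singleton)
  ultimately show ?thesis using e Blk_card[OF i1] by simp
qed



lemma nonincr: "x \<le> y \<Longrightarrow> (\<forall>p. x \<le> p \<and> p < y \<longrightarrow> f (Suc p) \<le> (f p :: nat)) \<Longrightarrow> f y \<le> f x"
proof (induction y)
  case 0 thus ?case by simp
next
  case (Suc y)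
  show ?case
  proof (cases "x = Suc y")
    case True thus ?thesis by simp
  next
    case False
    hence "x \<le> y" using Suc.prems by simp
    hence "f y \<le> f x" using Suc by simp
    moreover have "f (Suc y) \<le> f y" using Suc.prems \<open>x \<le> y\<close> by simp
    ultimately show ?thesis by simp
  qed
qed

lemma ascent: "x < y \<Longrightarrow> f x < (f y :: nat) \<Longrightarrow> \<exists>p. x \<le> p \<and> p < y \<and> f p < f (Suc p)"
  using nonincr[of x y f] by (meson less_imp_le not_le)

lemma psi_right:
  assumes p: "p \<in> Blk b i" "Suc p \<in> Blk b i"
  shows "psi n n' b c (w \<circ> transpose p (Suc p)) = psi n n' b c w"
proof -
  have "transpose p (Suc p) ` Blk b i' = Blk b i'" for i'
  proof (rule transpose_image_eq)
    show "p \<in> Blk b i' \<longleftrightarrow> Suc p \<in> Blk b i'" using p Blk_disj by metis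
  qed
  hence e: "(w \<circ> transpose p (Suc p)) ` Blk b i' = w ` Blk b i'" for i' by (metis image_comp)
  show ?thesis unfolding psi_def by (simp only: e)
qed

lemma psi_left:
  assumes t: "t \<in> Blk c j" "Suc t \<in> Blk c j"
  shows "psi n n' b c (transpose t (Suc t) \<circ> w) = psi n n' b c w"
proof -
  have tc: "transpose t (Suc t) ` Blk c j' = Blk c j'" for j'
  proof (rule transpose_image_eq)
    show "t \<in> Blk c j' \<longleftrightarrow> Suc t \<in> Blk c j'" using t Blk_disj by metis
  qed
  have ce: "card ((transpose t (Suc t) \<circ> w) ` Blk b i' \<inter> Blk c j') = card (w ` Blk b i' \<inter> Blk c j')" for i' j'
  proof -
    have "(transpose t (Suc t) \<circ> w) ` Blk b i' \<inter> Blk c j' = transpose t (Suc t) ` (w ` Blk b i' \<inter> Blk c j')"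
      by (subst image_Int[OF inj_transpose], subst tc, simp add: image_comp)
    thus ?thesis by (simp add: card_image)
  qed
  show ?thesis unfolding psi_def by (simp only: ce)
qed

lemma max_good:
  assumes W: "W \<in> dcoset d n n' b c m" and mx: "\<forall>w\<in>dcoset d n n' b c m. ninv d w \<le> ninv d W"
  shows "good d b c W"
proof -
  have Wp: "W permutes {1..d}" and Wm: "psi n n' b c W = m" using W by (auto simp: dcoset_def)
  have inj: "inj_on W {1..d}" using permutes_inj[OF Wp] by (simp add: inj_on_def inj_def)
  have "W y < W x" if x: "x \<in> {1..d}" and y: "y \<in> {1..d}" and xy: "x < y"
    and h: "(\<exists>i. x \<in> Blk b i \<and> y \<in> Blk b i) \<or> (\<exists>j. W x \<in> Blk c j \<and> W y \<in> Blk c j)" for x y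
  proof (rule ccontr)
    assume "\<not> W y < W x"
    moreover have "W x \<noteq> W y" using xy by (simp add: perm_inj_eq[OF Wp])
    ultimately have lt: "W x < W y" by simp
    from h show False
    proof
      assume "\<exists>i. x \<in> Blk b i \<and> y \<in> Blk b i"
      then obtain i where bi: "x \<in> Blk b i" "y \<in> Blk b i" by blast
      obtain p where p: "x \<le> p" "p < y" "W p < W (Suc p)" using ascent[OF xy lt] by blast
      have pb: "p \<in> Blk b i" "Suc p \<in> Blk b i" using Blk_interval[OF bi] p by auto
      have pD: "p \<in> {1..d}" "Suc p \<in> {1..d}" using p x y by auto
      let ?w = "W \<circ> transpose p (Suc p)"
      have "?w \<in> dcoset d n n' b c m"
        using permutes_compose[OF permutes_swap_id[OF pD] Wp] psi_right[OF pb, of n n' c W] Wm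
        by (simp add: dcoset_def)
      moreover have "ninv d ?w = ninv d W + 1" by (rule inv_right[OF pD p(3)])
      ultimately show False using mx by fastforce
    next
      assume "\<exists>j. W x \<in> Blk c j \<and> W y \<in> Blk c j"
      then obtain j where cj: "W x \<in> Blk c j" "W y \<in> Blk c j" by blast
      let ?g = "inv W"
      have gp: "?g permutes {1..d}" by (rule permutes_inv[OF Wp])
      have "?g (W x) < ?g (W y)" using xy by (simp add: permutes_inverses(2)[OF Wp])
      then obtain t where t: "W x \<le> t" "t < W y" "?g t < ?g (Suc t)"
        using ascent[OF lt, of ?g] by blast
      have tc: "t \<in> Blk c j" "Suc t \<in> Blk c j" using Blk_interval[OF cj] t by auto
      have WxD: "W x \<in> {1..d}" "W y \<in> {1..d}" using perm_D[OF Wp] x y by auto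
      have tD: "t \<in> {1..d}" "Suc t \<in> {1..d}" using t WxD by auto
      let ?P = "?g t" and ?Q = "?g (Suc t)"
      have PQ: "?P \<in> {1..d}" "?Q \<in> {1..d}" using perm_D[OF gp] tD by auto
      have WPQ: "W ?P = t" "W ?Q = Suc t" by (simp_all add: permutes_inverses(1)[OF Wp])
      have notin: "(?P, ?Q) \<notin> invs d W" using WPQ by (simp add: invs_def)
      let ?w = "transpose t (Suc t) \<circ> W"
      have "?w \<in> dcoset d n n' b c m"
        using permutes_compose[OF Wp permutes_swap_id[OF tD]] psi_left[OF tc, of n n' b W] Wm
        by (simp add: dcoset_def)
      moreover have "ninv d ?w = ninv d W + 1"
        using inv_left[OF inj PQ t(3), of t] WPQ notin by simp
      ultimately show False using mx by fastforce
    qed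
  qed
  thus ?thesis unfolding good_def using Wp by blast
qed



lemma last_block:
  assumes g: "good (Suc d) b c w" and a: "a = Suc d" "a \<in> Blk b i" and wa: "w a \<in> Blk c j"
    and y: "y \<in> Blk b i" "y \<in> {1..Suc d}" and wy: "w y \<in> Blk c j''"
  shows "j \<le> j''"
proof (rule ccontr)
  assume "\<not> j \<le> j''"
  hence lt: "j'' < j" by simp
  have ya: "y \<noteq> a" using lt wa wy Blk_disj by (metis less_irrefl)
  hence "y < a" using y a by auto
  moreover have aD: "a \<in> {1..Suc d}" using a by auto
  ultimately have "w a < w y" using good_D[OF g y(2) aD] y a by blast
  moreover have "w y < w a" using Blk_order[OF wy wa lt] .
  ultimately show False by simp
qed

lemma last_min:
  assumes g: "good (Suc d) b c w" and a: "a = Suc d" and wa: "w a \<in> Blk c j"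
    and u: "u \<in> Blk c j" "u \<in> {1..Suc d}"
  shows "w a \<le> u"
proof -
  have w: "w permutes {1..Suc d}" using g by (rule good_perm)
  obtain z where z: "z \<in> {1..Suc d}" "w z = u" using u(2) permutes_image[OF w] by (metis imageE)
  show ?thesis
  proof (cases "z = a")
    case True thus ?thesis using z by simp
  next
    case False
    hence "z < a" using z a by auto
    moreover have aD: "a \<in> {1..Suc d}" using a by auto
    ultimately have "w a < w z" using good_D[OF g z(1) aD] wa u z by blast
    thus ?thesis using z by simp
  qed
qed

lemma good_unique:
  "good d b c w \<Longrightarrow> good d b c w' \<Longrightarrow> psi n n' b c w = psi n n' b c w' \<Longrightarrow>
   PS b n = d \<Longrightarrow> PS c n' = d \<Longrightarrow> w = w'"
proof (induction d arbitrary: b c w w')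
  case 0
  have "w permutes {}" "w' permutes {}" using 0 good_perm by fastforce+
  thus ?case by simp
next
  case (Suc d)
  note g = Suc.prems(1) and g' = Suc.prems(2) and ps = Suc.prems(3)
  have w: "w permutes {1..Suc d}" and w': "w' permutes {1..Suc d}" using g g' good_perm by auto
  define a where "a = Suc d"
  have aD: "a \<in> {1..Suc d}" unfolding a_def by simp
  obtain i where i: "i \<in> {1..n}" "a \<in> Blk b i" using Blk_cover[of a b n] aD Suc.prems(4) by auto
  obtain j where j: "j \<in> {1..n'}" "w a \<in> Blk c j"
    using Blk_cover[of "w a" c n'] perm_D[OF w aD] Suc.prems(5) by auto
  obtain j' where j': "j' \<in> {1..n'}" "w' a \<in> Blk c j'"
    using Blk_cover[of "w' a" c n'] perm_D[OF w' aD] Suc.prems(5) by auto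
  have ex: "\<exists>y \<in> Blk b i. v y \<in> Blk c jj"
    if "psi n n' b c v i jj = psi n n' b c u i jj" "u a \<in> Blk c jj" "jj \<in> {1..n'}" for u v jj
  proof -
    have "u a \<in> u ` Blk b i \<inter> Blk c jj" using i that by auto
    hence "card (u ` Blk b i \<inter> Blk c jj) > 0" using Blk_finite by (auto simp: card_gt_0_iff)
    hence "card (v ` Blk b i \<inter> Blk c jj) > 0" using that i by (simp add: psi_def)
    hence "v ` Blk b i \<inter> Blk c jj \<noteq> {}" by auto
    thus ?thesis by auto
  qed
  obtain y where y: "y \<in> Blk b i" "w y \<in> Blk c j'" using ex[of w j' w'] ps j' by auto
  obtain y' where y': "y' \<in> Blk b i" "w' y' \<in> Blk c j" using ex[of w' j w] ps j by auto
  have yD: "y \<in> {1..Suc d}" "y' \<in> {1..Suc d}"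
    using Blk_sub[OF i(1), of b] y y' Suc.prems(4) by auto
  have "j \<le> j'" using last_block[OF g a_def i(2) j(2) y(1) yD(1) y(2)] .
  moreover have "j' \<le> j" using last_block[OF g' a_def i(2) j'(2) y'(1) yD(2) y'(2)] .
  ultimately have jj: "j' = j" by simp
  have w'aD: "w' a \<in> {1..Suc d}" "w a \<in> {1..Suc d}" using perm_D[OF w' aD] perm_D[OF w aD] by auto
  have "w a \<le> w' a" using last_min[OF g a_def j(2)] j'(2) jj w'aD by auto
  moreover have "w' a \<le> w a" using last_min[OF g' a_def j'(2)] j(2) jj w'aD by auto
  ultimately have eqa: "w a = w' a" by simp
  let ?b = "b(i := b i - 1)" and ?c = "c(j := c j - 1)"
  have gh: "good d ?b ?c (hat w a)" using good_hat[OF g i(2) aD j(2)] by simp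
  have gh': "good d ?b ?c (hat w' a)" using good_hat[OF g' i(2) aD] j'(2) jj by simp
  have ph: "psi n n' ?b ?c (hat w a) = psi n n' ?b ?c (hat w' a)"
    using psi_hat[OF w i(2) i(1) j(2) j(1)] psi_hat[OF w' i(2) i(1) j'(2)[unfolded jj] j(1)] ps by simp
  have bi: "b i \<ge> 1" and cj: "c j \<ge> 1" using Blk_ne i(2) j(2) by auto
  have sb: "PS ?b n = d" using sum_dec[of "{1..n}" b i] bi i(1) Suc.prems(4) by simp
  have sc: "PS ?c n' = d" using sum_dec[of "{1..n'}" c j] cj j(1) Suc.prems(5) by simp
  have hh: "hat w a = hat w' a" by (rule Suc.IH[OF gh gh' ph sb sc])
  show ?case
  proof
    fix x show "w x = w' x"
    proof (cases "x = a")
      case True thus ?thesis using eqa by simp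
    next
      case False
      thus ?thesis using recon[OF w False] recon[OF w' False] eqa hh by simp
    qed
  qed
qed



lemma matset_red:
  assumes m: "m \<in> matset n n' b c" and i: "i \<in> {1..n}" and j: "j \<in> {1..n'}" and mij: "m i j \<ge> 1"
  shows "m(i := (m i)(j := m i j - 1)) \<in> matset n n' (b(i := b i - 1)) (c(j := c j - 1))"
proof -
  let ?m = "m(i := (m i)(j := m i j - 1))"
  have rows: "(\<Sum>j'\<in>{1..n'}. m i' j') = b i'" if "i' \<in> {1..n}" for i'
    using m that by (simp add: matset_def)
  have cols: "(\<Sum>i'\<in>{1..n}. m i' j') = c j'" if "j' \<in> {1..n'}" for j'
    using m that by (simp add: matset_def)
  have zero: "m i' j' = 0" if "\<not> (i' \<in> {1..n} \<and> j' \<in> {1..n'})" for i' j'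
    using m that by (simp add: matset_def)
  have r: "(\<Sum>j'\<in>{1..n'}. ?m i' j') = (b(i := b i - 1)) i'" if i': "i' \<in> {1..n}" for i'
  proof (cases "i' = i")
    case True
    have "(\<Sum>j'\<in>{1..n'}. ?m i' j') = sum ((m i)(j := m i j - 1)) {1..n'}" using True by simp
    also have "\<dots> = sum (m i) {1..n'} - 1" using sum_dec[of "{1..n'}" "m i" j] mij j by simp
    finally show ?thesis using True rows[OF i] by simp
  next
    case False thus ?thesis using rows[OF i'] by simp
  qed
  have cl: "(\<Sum>i'\<in>{1..n}. ?m i' j') = (c(j := c j - 1)) j'" if j': "j' \<in> {1..n'}" for j'
  proof (cases "j' = j")
    case True
    have e: "(\<lambda>i'. ?m i' j') = (\<lambda>i'. m i' j)(i := m i j - 1)" using True by (auto simp: fun_eq_iff)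
    have "(\<Sum>i'\<in>{1..n}. ?m i' j') = sum ((\<lambda>i'. m i' j)(i := m i j - 1)) {1..n}" by (simp only: e)
    also have "\<dots> = (\<Sum>i'\<in>{1..n}. m i' j) - 1" using sum_dec[of "{1..n}" "\<lambda>i'. m i' j" i] mij i by simp
    finally show ?thesis using True cols[OF j] by simp
  next
    case False
    have e: "(\<lambda>i'. ?m i' j') = (\<lambda>i'. m i' j')" using False by (auto simp: fun_eq_iff)
    show ?thesis using False cols[OF j'] by (simp only: e) simp
  qed
  have z: "?m i' j' = 0" if "\<not> (i' \<in> {1..n} \<and> j' \<in> {1..n'})" for i' j'
    using zero[OF that] that i j by auto
  show ?thesis unfolding matset_def using r cl z by blast
qed

lemma Blk_last: "b i \<ge> 1 \<Longrightarrow> i \<ge> 1 \<Longrightarrow> PS b i \<in> Blk b i"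
  using PS_Suc[of i b] unfolding Blk_mem by simp

lemma exists_perm:
  "m \<in> matset n n' b c \<Longrightarrow> PS b n = d \<Longrightarrow> PS c n' = d \<Longrightarrow> \<exists>w. w permutes {1..d} \<and> psi n n' b c w = m"
proof (induction d arbitrary: b c m)
  case 0
  have b0: "b k = 0" if "k \<in> {1..n}" for k using 0(2) that by simp
  have m0: "m i j = 0" for i j
  proof (cases "i \<in> {1..n} \<and> j \<in> {1..n'}")
    case True
    hence "(\<Sum>j'\<in>{1..n'}. m i j') = 0" using 0(1) b0 by (simp add: matset_def)
    thus ?thesis using True by simp
  next
    case False thus ?thesis using 0(1) by (simp add: matset_def)
  qed
  have "psi n n' b c id = m"
  proof (intro ext)
    fix i j
    show "psi n n' b c id i j = m i j"
    proof (cases "i \<in> {1..n} \<and> j \<in> {1..n'}")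
      case True
      hence "card (Blk b i) = 0" using Blk_card[of i b] b0 by simp
      hence "Blk b i = {}" using Blk_finite by simp
      thus ?thesis using True m0 by (simp add: psi_def)
    next
      case False thus ?thesis using m0 unfolding psi_def by auto
    qed
  qed
  thus ?case using permutes_id[of "{1..0::nat}"] by blast
next
  case (Suc d)
  have rows: "(\<Sum>j'\<in>{1..n'}. m i' j') = b i'" if "i' \<in> {1..n}" for i'
    using Suc.prems(1) that by (simp add: matset_def)
  have cols: "(\<Sum>i'\<in>{1..n}. m i' j') = c j'" if "j' \<in> {1..n'}" for j'
    using Suc.prems(1) that by (simp add: matset_def)
  obtain i where i: "i \<in> {1..n}" "b i \<ge> 1"
  proof -
    have "\<not> (\<forall>k\<in>{1..n}. b k = 0)"
    proof
      assume "\<forall>k\<in>{1..n}. b k = 0"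
      hence "PS b n = 0" by simp
      thus False using Suc.prems(2) by simp
    qed
    thus ?thesis using that by (auto simp: Suc_le_eq)
  qed
  obtain j where j: "j \<in> {1..n'}" "m i j \<ge> 1"
  proof -
    have "\<not> (\<forall>k\<in>{1..n'}. m i k = 0)"
    proof
      assume "\<forall>k\<in>{1..n'}. m i k = 0"
      hence "(\<Sum>j'\<in>{1..n'}. m i j') = 0" by simp
      thus False using rows[OF i(1)] i(2) by simp
    qed
    thus ?thesis using that by (auto simp: Suc_le_eq)
  qed
  have "m i j \<le> c j" using cols[OF j(1)] i(1) member_le_sum[of i "{1..n}" "\<lambda>i'. m i' j"] by simp
  hence cj: "c j \<ge> 1" using j(2) by simp
  define a where "a = PS b i"
  define v where "v = PS c j"
  have a: "a \<in> Blk b i" unfolding a_def using Blk_last i by auto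
  have v: "v \<in> Blk c j" unfolding v_def using Blk_last j cj by auto
  have aD: "a \<in> {1..Suc d}" using Blk_sub[OF i(1), of b] a Suc.prems(2) by auto
  have vD: "v \<in> {1..Suc d}" using Blk_sub[OF j(1), of c] v Suc.prems(3) by auto
  let ?b = "b(i := b i - 1)" and ?c = "c(j := c j - 1)" and ?m = "m(i := (m i)(j := m i j - 1))"
  have mr: "?m \<in> matset n n' ?b ?c" by (rule matset_red[OF Suc.prems(1) i(1) j])
  have sb: "PS ?b n = d" using sum_dec[of "{1..n}" b i] i Suc.prems(2) by simp
  have sc: "PS ?c n' = d" using sum_dec[of "{1..n'}" c j] cj j(1) Suc.prems(3) by simp
  obtain u where u: "u permutes {1..d}" "psi n n' ?b ?c u = ?m" using Suc.IH[OF mr sb sc] by blast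
  define w where "w x = (if x = a then v else if x \<in> {1..Suc d} then siginv v (u (sig a x)) else x)" for x
  have wa: "w a = v" by (simp add: w_def)
  have wx: "w x = siginv v (u (sig a x))" if "x \<in> {1..Suc d}" "x \<noteq> a" for x
    using that by (simp add: w_def)
  have wp: "w permutes {1..Suc d}"
  proof (rule inj_imp_permutes)
    show "finite {1..Suc d}" by simp
  next
    show "inj_on w {1..Suc d}"
    proof (rule inj_onI)
      fix x y assume x: "x \<in> {1..Suc d}" and y: "y \<in> {1..Suc d}" and e: "w x = w y"
      show "x = y"
      proof (cases "x = a"; cases "y = a")
        assume "x \<noteq> a" "y \<noteq> a"
        hence "siginv v (u (sig a x)) = siginv v (u (sig a y))" using e wx x y by simp
        hence "sig v (siginv v (u (sig a x))) = sig v (siginv v (u (sig a y)))" by simp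
        hence "u (sig a x) = u (sig a y)" by simp
        hence "sig a x = sig a y" using perm_inj_eq[OF u(1)] by simp
        thus "x = y" using \<open>x \<noteq> a\<close> \<open>y \<noteq> a\<close> sig_inj by simp
      next
        assume "x = a" "y \<noteq> a"
        hence "v = siginv v (u (sig a y))" using e wx[OF y] wa by simp
        thus "x = y" using siginv_neq by metis
      next
        assume "x \<noteq> a" "y = a"
        hence "v = siginv v (u (sig a x))" using e wx[OF x] wa by simp
        thus "x = y" using siginv_neq by metis
      qed simp
    qed
  next
    fix x assume x: "x \<in> {1..Suc d}"
    show "w x \<in> {1..Suc d}"
    proof (cases "x = a")
      case True thus ?thesis using wa vD by simp
    next
      case False
      have "sig a x \<in> {1..Suc d - 1}" using sig_D[OF x aD False] .
      hence "u (sig a x) \<in> {1..Suc d - 1}" using perm_D[OF u(1)] by simp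
      hence "siginv v (u (sig a x)) \<in> {1..Suc d}" using siginv_D[OF _ vD] by blast
      thus ?thesis using wx[OF x False] by simp
    qed
  next
    fix x assume "x \<notin> {1..Suc d}" thus "w x = x" using aD by (auto simp: w_def)
  qed
  have hw: "hat w a = u"
  proof
    fix y
    have ne: "siginv a y \<noteq> a" by simp
    show "hat w a y = u y"
    proof (cases "siginv a y \<in> {1..Suc d}")
      case True
      thus ?thesis unfolding hat_apply' wa using wx[OF True ne] by simp
    next
      case False
      hence yn: "y \<notin> {1..d}" using siginv_D[of y "Suc d" a] aD by auto
      hence uy: "u y = y" using u(1) by (simp add: permutes_not_in)
      have "w (siginv a y) = siginv a y" using False ne unfolding w_def by auto
      moreover have "sig v (siginv a y) = y"
      proof (cases "y = 0")
        case True thus ?thesis using aD vD by (simp add: siginv_def sig_def)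
      next
        case False
        hence "y \<ge> Suc d" using yn by auto
        thus ?thesis using aD vD by (simp add: siginv_def sig_def)
      qed
      ultimately show ?thesis unfolding hat_apply' wa uy by simp
    qed
  qed
  have ph: "psi n n' ?b ?c (hat w a) = (psi n n' b c w)(i := (psi n n' b c w i)(j := psi n n' b c w i j - 1))"
    using psi_hat[OF wp a i(1) _ j(1)] wa v by simp
  hence eq: "(psi n n' b c w)(i := (psi n n' b c w i)(j := psi n n' b c w i j - 1)) = ?m"
    using hw u(2) by simp
  have pij: "psi n n' b c w i j \<ge> 1"
  proof -
    have "v \<in> w ` Blk b i \<inter> Blk c j" using a v wa by force
    hence "card (w ` Blk b i \<inter> Blk c j) > 0" using Blk_finite by (auto simp: card_gt_0_iff)
    thus ?thesis using i(1) j(1) by (simp add: psi_def)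
  qed
  have "psi n n' b c w = m"
  proof (intro ext)
    fix i' j'
    have e: "((psi n n' b c w)(i := (psi n n' b c w i)(j := psi n n' b c w i j - 1))) i' j' = ?m i' j'"
      using eq by simp
    show "psi n n' b c w i' j' = m i' j'"
    proof (cases "i' = i \<and> j' = j")
      case True thus ?thesis using e pij j(2) by simp
    next
      case False thus ?thesis using e by (auto split: if_splits)
    qed
  qed
  thus ?case using wp by blast
qed



lemma wlong_char:
  assumes W0: "W0 \<in> dcoset d n n' b c m" and sb: "PS b n = d" and sc: "PS c n' = d"
  shows "wlong d n n' b c m \<in> dcoset d n n' b c m \<and> good d b c (wlong d n n' b c m)"
proof -
  let ?D = "dcoset d n n' b c m"
  have fin: "finite ?D"
    by (rule finite_subset[of _ "{p. p permutes {1..d}}"]) (auto simp: dcoset_def finite_permutations)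
  have "Max (ninv d ` ?D) \<in> ninv d ` ?D" by (rule Max_in) (use fin W0 in auto)
  then obtain W where W: "W \<in> ?D" "ninv d W = Max (ninv d ` ?D)" by auto
  have mx: "\<forall>w\<in>?D. ninv d w \<le> ninv d W" using W(2) fin by auto
  have gW: "good d b c W" by (rule max_good[OF W(1) mx])
  have cl: "clen d w = ninv d w" if "w \<in> ?D" for w
    using that clen_eq by (auto simp: dcoset_def)
  have "wlong d n n' b c m = W" unfolding wlong_def
  proof (rule the_equality)
    show "W \<in> ?D \<and> (\<forall>w'\<in>?D. clen d w' \<le> clen d W)" using W(1) mx cl by auto
  next
    fix x assume x: "x \<in> ?D \<and> (\<forall>w'\<in>?D. clen d w' \<le> clen d x)"
    hence mxx: "\<forall>w'\<in>?D. ninv d w' \<le> ninv d x" using cl by auto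
    have gx: "good d b c x" by (rule max_good[OF conjunct1[OF x] mxx])
    have "psi n n' b c x = psi n n' b c W" using x W(1) by (simp add: dcoset_def)
    thus "x = W" using good_unique[OF gx gW _ sb sc] by blast
  qed
  thus ?thesis using W gW by simp
qed

lemma G1: fixes i :: nat shows "1 \<le> i \<Longrightarrow> (\<Sum>k\<in>{1..i}. f k) = (\<Sum>k\<in>{1..i-1}. f k) + (f i :: nat)"
proof -
  assume "1 \<le> i"
  hence "{1..i} = insert i {1..i-1}" by auto
  moreover have "i \<notin> {1..i-1}" by auto
  ultimately show ?thesis by simp
qed

lemma G2: fixes i n :: nat shows "i \<le> n \<Longrightarrow> (\<Sum>k\<in>{i..n}. f k) = f i + (\<Sum>k\<in>{i+1..n}. f k :: nat)"
proof -
  assume "i \<le> n"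
  hence "{i..n} = insert i {i+1..n}" by auto
  thus ?thesis by simp
qed

lemma G3: fixes j N :: nat shows "1 \<le> j \<Longrightarrow> j \<le> N \<Longrightarrow> (\<Sum>k\<in>{j..N}. f k) + (\<Sum>k\<in>{1..j}. f k) = (\<Sum>k\<in>{1..N}. f k) + (f j :: nat)"
proof -
  assume j: "1 \<le> j" "j \<le> N"
  have "{1..N} = {1..j} \<union> {j+1..N}" using j by auto
  hence "(\<Sum>k\<in>{1..N}. f k) = (\<Sum>k\<in>{1..j}. f k) + (\<Sum>k\<in>{j+1..N}. f k)"
    by (simp add: sum.union_disjoint)
  thus ?thesis using G2[OF j(2), of f] by simp
qed

theorem proposition2p7:
  fixes d n n' i j a :: nat and b c :: "nat \<Rightarrow> nat" and m :: "nat \<Rightarrow> nat \<Rightarrow> nat"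
  assumes "d \<ge> 1"
    and "(\<Sum>k\<in>{1..n}. b k) = d" and "(\<Sum>k\<in>{1..n'}. c k) = d"
    and "m \<in> matset n n' b c"
    and "i \<in> {1..n}" and "j \<in> {1..n'}"
    and "a \<in> Blk b i" and "wlong d n n' b c m a \<in> Blk c j"
  shows "hat (wlong d n n' b c m) a
           = wlong (d - 1) n n' (b(i := b i - 1)) (c(j := c j - 1)) (m(i := (m i)(j := m i j - 1)))
       \<and> int (mlen d n n' b c m)
           - int (mlen (d - 1) n n' (b(i := b i - 1)) (c(j := c j - 1)) (m(i := (m i)(j := m i j - 1))))
           = int (msLG n' m i j) + int (msGL n m i j) - int (m i j) - 1
       \<and> int (mlen d n n' b c m)
           - int (mlen (d - 1) n n' (b(i := b i - 1)) (c(j := c j - 1)) (m(i := (m i)(j := m i j - 1))))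
           = int (msLG n' m (i - 1) j) + int (msGL n m (i + 1) j) + int (b i) - 1
       \<and> int (mlen d n n' b c m)
           - int (mlen (d - 1) n n' (b(i := b i - 1)) (c(j := c j - 1)) (m(i := (m i)(j := m i j - 1))))
           = int (msLG n' m i (j + 1)) + int (msGL n m i (j - 1)) + int (c j) - 1"
proof -
  note sb = assms(2) and sc = assms(3) and mm = assms(4) and i = assms(5) and j = assms(6)
    and a = assms(7)
  let ?W = "wlong d n n' b c m"
  let ?b = "b(i := b i - 1)" and ?c = "c(j := c j - 1)" and ?m = "m(i := (m i)(j := m i j - 1))"
  obtain W0 where "W0 permutes {1..d}" "psi n n' b c W0 = m" using exists_perm[OF mm sb sc] by blast
  hence W0: "W0 \<in> dcoset d n n' b c m" by (simp add: dcoset_def)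
  have wc: "?W \<in> dcoset d n n' b c m" "good d b c ?W" using wlong_char[OF W0 sb sc] by auto
  have Wp: "?W permutes {1..d}" and Wm: "psi n n' b c ?W = m" using wc(1) by (auto simp: dcoset_def)
  have wa: "?W a \<in> Blk c j" by (rule assms(8))
  have aD: "a \<in> {1..d}" using Blk_sub[OF i, of b] a sb by auto
  let ?W' = "hat ?W a"
  have hp: "?W' permutes {1..d-1}" by (rule hat_perm[OF Wp aD])
  have psW': "psi n n' ?b ?c ?W' = ?m" using psi_hat[OF Wp a i wa j] Wm by simp
  have gW': "good (d-1) ?b ?c ?W'" by (rule good_hat[OF wc(2) a aD wa])
  have bi: "b i \<ge> 1" and cj: "c j \<ge> 1" using Blk_ne a wa by auto
  have sb': "PS ?b n = d - 1" using sum_dec[of "{1..n}" b i] bi i sb by simp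
  have sc': "PS ?c n' = d - 1" using sum_dec[of "{1..n'}" c j] cj j sc by simp
  have W'D: "?W' \<in> dcoset (d-1) n n' ?b ?c ?m" using hp psW' by (simp add: dcoset_def)
  have wc': "wlong (d-1) n n' ?b ?c ?m \<in> dcoset (d-1) n n' ?b ?c ?m" "good (d-1) ?b ?c (wlong (d-1) n n' ?b ?c ?m)"
    using wlong_char[OF W'D sb' sc'] by blast+
  have part1: "?W' = wlong (d-1) n n' ?b ?c ?m"
  proof (rule good_unique[OF gW' wc'(2) _ sb' sc'])
    have "psi n n' ?b ?c (wlong (d-1) n n' ?b ?c ?m) = ?m" using wc'(1) unfolding dcoset_def by blast
    thus "psi n n' ?b ?c ?W' = psi n n' ?b ?c (wlong (d-1) n n' ?b ?c ?m)" using psW' by simp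
  qed
  have l1: "mlen d n n' b c m = ninv d ?W" unfolding mlen_def by (rule clen_eq[OF Wp])
  have l2: "mlen (d-1) n n' ?b ?c ?m = ninv (d-1) ?W'" unfolding mlen_def part1[symmetric]
    by (rule clen_eq[OF hp])
  have dec: "ninv d ?W = ninv (d-1) ?W' + card {x\<in>{1..d}. x < a \<and> ?W a < ?W x}
                     + card {y\<in>{1..d}. a < y \<and> ?W y < ?W a}" by (rule ninv_hat[OF Wp aD])
  have cL: "card {x\<in>{1..d}. x < a \<and> ?W a < ?W x} = msLG n' m (i-1) j + card {x \<in> Blk b i. x < a}"
    using count_left[OF wc(2) sb sc i j a wa] Wm by simp
  have cR: "card {x\<in>{1..d}. a < x \<and> ?W x < ?W a} = msGL n m (i+1) j + card {x \<in> Blk b i. a < x}"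
    using count_right[OF wc(2) sb sc i j a wa] Wm by simp
  have cM: "card {x \<in> Blk b i. x < a} + card {x \<in> Blk b i. a < x} = b i - 1" by (rule count_mid[OF a])
  have f2: "int (mlen d n n' b c m) - int (mlen (d-1) n n' ?b ?c ?m)
      = int (msLG n' m (i - 1) j) + int (msGL n m (i + 1) j) + int (b i) - 1"
  proof -
    have e1: "ninv d ?W = ninv (d-1) ?W' + msLG n' m (i-1) j + msGL n m (i+1) j + (b i - 1)"
      using dec cL cR cM by linarith
    have e2: "mlen d n n' b c m = mlen (d-1) n n' ?b ?c ?m + msLG n' m (i-1) j + msGL n m (i+1) j + (b i - 1)"
      using e1 l1 l2 by linarith
    have "int (mlen d n n' b c m) = int (mlen (d-1) n n' ?b ?c ?m) + int (msLG n' m (i-1) j)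
       + int (msGL n m (i+1) j) + (int (b i) - 1)"
      unfolding e2 using bi by (simp add: of_nat_diff)
    thus ?thesis by linarith
  qed
  have i1: "1 \<le> i" "i \<le> n" and j1: "1 \<le> j" "j \<le> n'" using i j by auto
  have rows: "(\<Sum>j'\<in>{1..n'}. m i j') = b i" using mm i by (simp add: matset_def)
  have cols: "(\<Sum>i'\<in>{1..n}. m i' j) = c j" using mm j by (simp add: matset_def)
  have I1: "msLG n' m i j = msLG n' m (i-1) j + (\<Sum>j'\<in>{j..n'}. m i j')"
    unfolding msLG_def by (rule G1[OF i1(1)])
  have I2: "msGL n m i j = msGL n m (i+1) j + (\<Sum>j'\<in>{1..j}. m i j')"
    unfolding msGL_def using G2[OF i1(2), of "\<lambda>i'. \<Sum>j'\<in>{1..j}. m i' j'"] by simp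
  have I3: "(\<Sum>j'\<in>{j..n'}. m i j') + (\<Sum>j'\<in>{1..j}. m i j') = b i + m i j"
    using G3[OF j1, of "m i"] rows by simp
  have I4: "msLG n' m i j = msLG n' m i (j+1) + (\<Sum>i'\<in>{1..i}. m i' j)"
  proof -
    have "msLG n' m i j = (\<Sum>i'\<in>{1..i}. m i' j + (\<Sum>j'\<in>{j+1..n'}. m i' j'))"
      unfolding msLG_def using G2[OF j1(2)] by simp
    thus ?thesis unfolding msLG_def by (simp add: sum.distrib)
  qed
  have I5: "msGL n m i j = msGL n m i (j-1) + (\<Sum>i'\<in>{i..n}. m i' j)"
  proof -
    have "msGL n m i j = (\<Sum>i'\<in>{i..n}. (\<Sum>j'\<in>{1..j-1}. m i' j') + m i' j)"
      unfolding msGL_def using G1[OF j1(1)] by simp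
    thus ?thesis unfolding msGL_def by (simp add: sum.distrib)
  qed
  have I6: "(\<Sum>i'\<in>{i..n}. m i' j) + (\<Sum>i'\<in>{1..i}. m i' j) = c j + m i j"
    using G3[OF i1, of "\<lambda>i'. m i' j"] cols by simp
  have f1: "int (mlen d n n' b c m) - int (mlen (d-1) n n' ?b ?c ?m)
      = int (msLG n' m i j) + int (msGL n m i j) - int (m i j) - 1"
  proof -
    have "int (msLG n' m i j) = int (msLG n' m (i-1) j) + int (\<Sum>j'\<in>{j..n'}. m i j')" using I1 by simp
    moreover have "int (msGL n m i j) = int (msGL n m (i+1) j) + int (\<Sum>j'\<in>{1..j}. m i j')" using I2 by simp
    moreover have "int (\<Sum>j'\<in>{j..n'}. m i j') + int (\<Sum>j'\<in>{1..j}. m i j') = int (b i) + int (m i j)"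
      using I3 by (metis of_nat_add)
    ultimately show ?thesis using f2 by linarith
  qed
  have f3: "int (mlen d n n' b c m) - int (mlen (d-1) n n' ?b ?c ?m)
      = int (msLG n' m i (j + 1)) + int (msGL n m i (j - 1)) + int (c j) - 1"
  proof -
    have "int (msLG n' m i j) = int (msLG n' m i (j+1)) + int (\<Sum>i'\<in>{1..i}. m i' j)" using I4 by simp
    moreover have "int (msGL n m i j) = int (msGL n m i (j-1)) + int (\<Sum>i'\<in>{i..n}. m i' j)" using I5 by simp
    moreover have "int (\<Sum>i'\<in>{i..n}. m i' j) + int (\<Sum>i'\<in>{1..i}. m i' j) = int (c j) + int (m i j)"
      using I6 by (metis of_nat_add)
    ultimately show ?thesis using f1 by linarith
  qed
  show ?thesis using part1 f1 f2 f3 by simp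
qed

end
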